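(* Let $G$ be a group and let $S=\bigoplus_{g\in G}S_g$ be an epsilon-finitely $G$-graded ring. Then for every normal subgroup $N$ of $G$, the induced $G/N$-grading $\{S_C\}_{C\in G/N}$ is epsilon-finite (in particular epsilon-strong).
   Context: Rings are associative, not necessarily unital; $AB$ denotes finite sums of products. A grading $\{T_h\}_{h\in H}$ of a ring $T$ ($T=\bigoplus_hT_h$, $T_hT_k\subseteq T_{hk}$) is epsilon-strong if $T_hT_{h^{-1}}T_h=T_h$ for all $h$ and each ring $T_hT_{h^{-1}}$ has a multiplicative identity element $\epsilon_h$ (these are commuting idempotents). It is epsilon-finite if it is epsilon-strong and the set $\bigvee\{\epsilon_h\mid h\in H\}$ is finite, where for commuting idempotents $a\vee b=a+b-ab$ and $\bigvee F$ denotes the set of finite joins of elements of $F$. Induced grading: $S_C=\bigoplus_{g\in C}S_g$. *)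

theory Defs
  imports "HOL-Algebra.Coset"
begin

text \<open>Rings are elements of a type of class ring (associative, not necessarily unital).
  The ring S is the whole type. A grading by a group H is a family T indexed by the
  carrier of H.\<close>

definition ring_prodset :: "'a::ring set \<Rightarrow> 'a set \<Rightarrow> 'a set" where
  "ring_prodset A B = {\<Sum>i<n. a i * b i | (n::nat) a b. \<forall>i<n. a i \<in> A \<and> b i \<in> B}"

definition is_grading :: "('h, 'm) monoid_scheme \<Rightarrow> ('h \<Rightarrow> 'a::ring set) \<Rightarrow> bool" where
  "is_grading H T \<longleftrightarrow>
     (\<forall>h\<in>carrier H. 0 \<in> T h \<and> (\<forall>x\<in>T h. \<forall>y\<in>T h. x - y \<in> T h)) \<and>
     (\<forall>h\<in>carrier H. \<forall>k\<in>carrier H. \<forall>x\<in>T h. \<forall>y\<in>T k. x * y \<in> T (h \<otimes>\<^bsub>H\<^esub> k)) \<and>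
     (\<forall>x::'a. \<exists>F f. finite F \<and> F \<subseteq> carrier H \<and> (\<forall>h\<in>F. f h \<in> T h) \<and> x = (\<Sum>h\<in>F. f h)) \<and>
     (\<forall>F f. finite F \<and> F \<subseteq> carrier H \<and> (\<forall>h\<in>F. f h \<in> T h) \<and> (\<Sum>h\<in>F. f h) = 0
            \<longrightarrow> (\<forall>h\<in>F. f h = 0))"

definition is_identity_of :: "'a::ring \<Rightarrow> 'a set \<Rightarrow> bool" where
  "is_identity_of e A \<longleftrightarrow> e \<in> A \<and> (\<forall>x\<in>A. e * x = x \<and> x * e = x)"

definition eps :: "('h, 'm) monoid_scheme \<Rightarrow> ('h \<Rightarrow> 'a::ring set) \<Rightarrow> 'h \<Rightarrow> 'a" where
  "eps H T h = (THE e. is_identity_of e (ring_prodset (T h) (T (inv\<^bsub>H\<^esub> h))))"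

definition epsilon_strong :: "('h, 'm) monoid_scheme \<Rightarrow> ('h \<Rightarrow> 'a::ring set) \<Rightarrow> bool" where
  "epsilon_strong H T \<longleftrightarrow> is_grading H T \<and>
     (\<forall>h\<in>carrier H. ring_prodset (ring_prodset (T h) (T (inv\<^bsub>H\<^esub> h))) (T h) = T h \<and>
        (\<exists>e. is_identity_of e (ring_prodset (T h) (T (inv\<^bsub>H\<^esub> h)))))"

text \<open>Finite joins (nonempty) of elements of E, with a \<or> b = a + b - a b.\<close>
inductive_set joins :: "'a::ring set \<Rightarrow> 'a set" for E where
  base: "e \<in> E \<Longrightarrow> e \<in> joins E"
| join: "a \<in> joins E \<Longrightarrow> b \<in> joins E \<Longrightarrow> a + b - a * b \<in> joins E"

definition epsilon_finite :: "('h, 'm) monoid_scheme \<Rightarrow> ('h \<Rightarrow> 'a::ring set) \<Rightarrow> bool" where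
  "epsilon_finite H T \<longleftrightarrow> epsilon_strong H T \<and> finite (joins (eps H T ` carrier H))"

definition induced :: "('g \<Rightarrow> 'a::ring set) \<Rightarrow> 'g set \<Rightarrow> 'a set" where
  "induced S C = {\<Sum>g\<in>F. f g | F f. finite F \<and> F \<subseteq> C \<and> (\<forall>g\<in>F. f g \<in> S g)}"

end

theory Submission imports Defs begin



definition addsub :: "'a::ring set \<Rightarrow> bool" where
  "addsub M \<longleftrightarrow> 0 \<in> M \<and> (\<forall>x\<in>M. \<forall>y\<in>M. x - y \<in> M)"

lemma addsub_zero: "addsub M \<Longrightarrow> 0 \<in> M" by (simp add: addsub_def)
lemma addsub_diff: "addsub M \<Longrightarrow> x \<in> M \<Longrightarrow> y \<in> M \<Longrightarrow> x - y \<in> M" by (simp add: addsub_def)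
lemma addsub_neg: "addsub M \<Longrightarrow> x \<in> M \<Longrightarrow> - x \<in> M"
  using addsub_diff[of M 0 x] addsub_zero[of M] by simp
lemma addsub_add: "addsub M \<Longrightarrow> x \<in> M \<Longrightarrow> y \<in> M \<Longrightarrow> x + y \<in> M"
  using addsub_diff[of M x "- y"] addsub_neg[of M y] by simp
lemma addsub_sum: assumes "addsub M" "finite I" "\<And>i. i \<in> I \<Longrightarrow> f i \<in> M" shows "sum f I \<in> M"
  using assms(2,3) by (induction I rule: finite_induct) (auto intro: addsub_add[OF assms(1)] addsub_zero[OF assms(1)])

lemma rp_induct:
  assumes "x \<in> ring_prodset A B" "P 0" "\<And>a b. a \<in> A \<Longrightarrow> b \<in> B \<Longrightarrow> P (a * b)"
    "\<And>x y. P x \<Longrightarrow> P y \<Longrightarrow> P (x + y)"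
  shows "P x"
proof -
  have "\<exists>(n::nat) a b. x = (\<Sum>i<n. a i * b i) \<and> (\<forall>i<n. a i \<in> A \<and> b i \<in> B)"
    using assms(1) unfolding ring_prodset_def by simp
  then obtain n :: nat and a b where x: "x = (\<Sum>i<n. a i * b i)" "\<forall>i<n. a i \<in> A \<and> b i \<in> B" by blast
  have "\<forall>i<m. a i \<in> A \<and> b i \<in> B \<Longrightarrow> P (\<Sum>i<m. a i * b i)" for m
    by (induction m) (auto simp: assms(2,3,4))
  then show ?thesis using x by auto
qed

lemma rp_subset:
  assumes "addsub M" "\<And>a b. a \<in> A \<Longrightarrow> b \<in> B \<Longrightarrow> a * b \<in> M"
  shows "ring_prodset A B \<subseteq> M"
  using rp_induct[where P="\<lambda>x. x \<in> M"] assms addsub_zero addsub_add by blast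

lemma rp_single: "a \<in> A \<Longrightarrow> b \<in> B \<Longrightarrow> a * b \<in> ring_prodset A B"
  unfolding ring_prodset_def
  by (rule CollectI, rule exI[where x=1], rule exI[where x="\<lambda>_. a"], rule exI[where x="\<lambda>_. b"]) simp

lemma rp_zero: "0 \<in> ring_prodset A B"
  unfolding ring_prodset_def
  by (rule CollectI, rule exI[where x=0]) simp

lemma sum_lessThan_split: "(\<Sum>i<n+m. f i) = (\<Sum>i<n. f i) + (\<Sum>i<m. f (n+i))" for f :: "nat \<Rightarrow> 'a::comm_monoid_add"
  by (induction m) (auto simp: add.assoc)

lemma rp_add:
  assumes "x \<in> ring_prodset A B" "y \<in> ring_prodset A B"
  shows "x + y \<in> ring_prodset A B"
proof -
  have "\<exists>(n::nat) a b. x = (\<Sum>i<n. a i * b i) \<and> (\<forall>i<n. a i \<in> A \<and> b i \<in> B)"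
    using assms(1) unfolding ring_prodset_def by simp
  then obtain n :: nat and a b where x: "x = (\<Sum>i<n. a i * b i)" "\<forall>i<n. a i \<in> A \<and> b i \<in> B" by blast
  have "\<exists>(n::nat) a b. y = (\<Sum>i<n. a i * b i) \<and> (\<forall>i<n. a i \<in> A \<and> b i \<in> B)"
    using assms(2) unfolding ring_prodset_def by simp
  then obtain m :: nat and c d where y: "y = (\<Sum>i<m. c i * d i)" "\<forall>i<m. c i \<in> A \<and> d i \<in> B" by blast
  define a' where "a' i = (if i < n then a i else c (i - n))" for i
  define b' where "b' i = (if i < n then b i else d (i - n))" for i
  have "(\<Sum>i<n+m. a' i * b' i) = (\<Sum>i<n. a' i * b' i) + (\<Sum>i<m. a' (n+i) * b' (n+i))"
    by (rule sum_lessThan_split)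
  also have "\<dots> = x + y" unfolding a'_def b'_def x y by simp
  finally have "x + y = (\<Sum>i<n+m. a' i * b' i)" by simp
  moreover have "\<forall>i<n+m. a' i \<in> A \<and> b' i \<in> B" using x y by (auto simp: a'_def b'_def)
  ultimately show ?thesis unfolding ring_prodset_def by blast
qed

lemma rp_addsub:
  assumes "addsub A" shows "addsub (ring_prodset A B)"
proof -
  have "-x \<in> ring_prodset A B" if "x \<in> ring_prodset A B" for x
    using rp_induct[OF that, where P="\<lambda>x. -x \<in> ring_prodset A B"]
    by (metis add_uminus_conv_diff addsub_neg assms minus_add_distrib minus_mult_left
        minus_zero rp_add rp_single rp_zero)
  then show ?thesis unfolding addsub_def
    by (metis diff_conv_add_uminus rp_add rp_zero)
qed

lemma induced_induct:
  assumes "x \<in> induced S C" "P 0" "\<And>g s. g \<in> C \<Longrightarrow> s \<in> S g \<Longrightarrow> P s"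
    "\<And>x y. P x \<Longrightarrow> P y \<Longrightarrow> P (x + y)"
  shows "P x"
proof -
  obtain F f where x: "x = (\<Sum>g\<in>F. f g)" "finite F" "F \<subseteq> C" "\<forall>g\<in>F. f g \<in> S g"
    using assms(1) unfolding induced_def by auto
  have "finite F' \<Longrightarrow> F' \<subseteq> F \<Longrightarrow> P (\<Sum>g\<in>F'. f g)" for F'
    by (induction F' rule: finite_induct) (use x assms(2-4) in auto)
  then show ?thesis using x by auto
qed

lemma induced_single: "g \<in> C \<Longrightarrow> s \<in> S g \<Longrightarrow> s \<in> induced S C"
  unfolding induced_def
  by (rule CollectI, rule exI[where x="{g}"], rule exI[where x="\<lambda>_. s"]) simp

lemma induced_zero: "0 \<in> induced S C"
  unfolding induced_def by (rule CollectI, rule exI[where x="{}"]) simp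

lemma induced_addsub:
  assumes "\<And>g. g \<in> C \<Longrightarrow> addsub (S g)"
  shows "addsub (induced S C)"
proof -
  have "x - y \<in> induced S C" if hx: "x \<in> induced S C" and hy: "y \<in> induced S C" for x y
  proof -
    obtain F f where x: "x = (\<Sum>g\<in>F. f g)" "finite F" "F \<subseteq> C" "\<forall>g\<in>F. f g \<in> S g"
      using hx unfolding induced_def by auto
    obtain F' f' where y: "y = (\<Sum>g\<in>F'. f' g)" "finite F'" "F' \<subseteq> C" "\<forall>g\<in>F'. f' g \<in> S g"
      using hy unfolding induced_def by auto
    define h where "h g = (if g \<in> F then f g else 0) - (if g \<in> F' then f' g else 0)" for g
    have "(\<Sum>g\<in>F \<union> F'. h g) = (\<Sum>g\<in>F \<union> F'. (if g \<in> F then f g else 0)) - (\<Sum>g\<in>F \<union> F'. (if g \<in> F' then f' g else 0))"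
      unfolding h_def by (simp add: sum_subtractf)
    also have "\<dots> = x - y" unfolding x y
      using x(2) y(2) by (simp add: sum.If_cases Int_absorb1 Int_absorb2)
    finally have e: "x - y = (\<Sum>g\<in>F \<union> F'. h g)" by simp
    have "\<forall>g\<in>F \<union> F'. h g \<in> S g" unfolding h_def
      using x y assms by (auto intro!: addsub_diff addsub_zero addsub_neg)
    then show ?thesis unfolding induced_def using e x y by blast
  qed
  then show ?thesis unfolding addsub_def using induced_zero by blast
qed

lemma joins_mono: "x \<in> joins A \<Longrightarrow> A \<subseteq> B \<Longrightarrow> x \<in> joins B"
  by (induction rule: joins.induct) (auto intro: joins.intros)

lemma joins_sub: "x \<in> joins A \<Longrightarrow> A \<subseteq> joins B \<Longrightarrow> x \<in> joins B"
  by (induction rule: joins.induct) (auto intro: joins.intros)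




locale epsctx = group G for G :: "('g,'m) monoid_scheme" (structure) +
  fixes S :: "'g \<Rightarrow> 'a::ring set"
  assumes es: "epsilon_strong G S"
begin

lemma gr: "is_grading G S" using es by (simp add: epsilon_strong_def)

lemma S_addsub: "g \<in> carrier G \<Longrightarrow> addsub (S g)"
  using gr by (simp add: is_grading_def addsub_def)

lemma S_mult: "g \<in> carrier G \<Longrightarrow> h \<in> carrier G \<Longrightarrow> x \<in> S g \<Longrightarrow> y \<in> S h \<Longrightarrow> x * y \<in> S (g \<otimes> h)"
  using gr by (simp add: is_grading_def)

lemma S_RRS: "g \<in> carrier G \<Longrightarrow> ring_prodset (ring_prodset (S g) (S (inv g))) (S g) = S g"
  using es by (simp add: epsilon_strong_def)

lemma identity_unique: "is_identity_of e A \<Longrightarrow> is_identity_of e' A \<Longrightarrow> e' = e"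
  unfolding is_identity_of_def by metis

lemma eps_id: assumes "g \<in> carrier G"
  shows "is_identity_of (eps G S g) (ring_prodset (S g) (S (inv g)))"
proof -
  obtain e where e: "is_identity_of e (ring_prodset (S g) (S (inv g)))"
    using es assms by (auto simp: epsilon_strong_def)
  have "eps G S g = e" unfolding eps_def
    by (rule the_equality) (use identity_unique e in blast)+
  then show ?thesis using e by simp
qed

abbreviation "\<epsilon> g \<equiv> eps G S g"

lemma R_S1: "g \<in> carrier G \<Longrightarrow> ring_prodset (S g) (S (inv g)) \<subseteq> S \<one>"
  by (rule rp_subset) (use S_mult[of g "inv g"] in \<open>auto intro: S_addsub\<close>)

lemma eps_in: "g \<in> carrier G \<Longrightarrow> \<epsilon> g \<in> ring_prodset (S g) (S (inv g))"
  using eps_id is_identity_of_def by blast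

lemma eps_S1: "g \<in> carrier G \<Longrightarrow> \<epsilon> g \<in> S \<one>"
  using R_S1 eps_in by blast

lemma eps_lid: "g \<in> carrier G \<Longrightarrow> x \<in> ring_prodset (S g) (S (inv g)) \<Longrightarrow> \<epsilon> g * x = x"
  using eps_id is_identity_of_def by blast
lemma eps_rid: "g \<in> carrier G \<Longrightarrow> x \<in> ring_prodset (S g) (S (inv g)) \<Longrightarrow> x * \<epsilon> g = x"
  using eps_id is_identity_of_def by blast

lemma eps_idem: "g \<in> carrier G \<Longrightarrow> \<epsilon> g * \<epsilon> g = \<epsilon> g"
  using eps_lid eps_in by blast

lemma eps_comm_S1: assumes g: "g \<in> carrier G" and s: "s \<in> S \<one>"
  shows "s * \<epsilon> g = \<epsilon> g * s"
proof -
  have 1: "s * \<epsilon> g \<in> ring_prodset (S g) (S (inv g))"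
    using eps_in[OF g]
  proof (rule rp_induct)
    fix a b assume a: "a \<in> S g" and b: "b \<in> S (inv g)"
    have "s * a \<in> S g" using S_mult[OF one_closed g s a] g by simp
    then show "s * (a * b) \<in> ring_prodset (S g) (S (inv g))"
      using rp_single[OF _ b] by (simp add: mult.assoc[symmetric])
  qed (auto simp: distrib_left rp_zero rp_add)
  have 2: "\<epsilon> g * s \<in> ring_prodset (S g) (S (inv g))"
    using eps_in[OF g]
  proof (rule rp_induct)
    fix a b assume a: "a \<in> S g" and b: "b \<in> S (inv g)"
    have "b * s \<in> S (inv g)" using S_mult[OF inv_closed[OF g] one_closed b s] g by simp
    then show "a * b * s \<in> ring_prodset (S g) (S (inv g))"
      using rp_single[OF a] by (simp add: mult.assoc)
  qed (auto simp: distrib_right rp_zero rp_add)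
  have "s * \<epsilon> g = \<epsilon> g * (s * \<epsilon> g)" using eps_lid[OF g 1] by simp
  also have "\<dots> = (\<epsilon> g * s) * \<epsilon> g" by (simp add: mult.assoc)
  also have "\<dots> = \<epsilon> g * s" using eps_rid[OF g 2] by simp
  finally show ?thesis .
qed

lemma eps_comm: "g \<in> carrier G \<Longrightarrow> h \<in> carrier G \<Longrightarrow> \<epsilon> g * \<epsilon> h = \<epsilon> h * \<epsilon> g"
  using eps_comm_S1 eps_S1 by metis

lemma eps_left: assumes g: "g \<in> carrier G" and s: "s \<in> S g" shows "\<epsilon> g * s = s"
proof -
  have "s \<in> ring_prodset (ring_prodset (S g) (S (inv g))) (S g)" using S_RRS g s by simp
  then show ?thesis
    by (rule rp_induct) (auto simp: distrib_left eps_lid[OF g] mult.assoc[symmetric])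
qed

lemma eps_right: assumes h: "h \<in> carrier G" and s: "s \<in> S (inv h)" shows "s * \<epsilon> h = s"
proof -
  have ih: "inv h \<in> carrier G" "inv (inv h) = h" using h by auto
  have "s \<in> ring_prodset (ring_prodset (S (inv h)) (S h)) (S (inv h))"
    using S_RRS[OF ih(1)] s ih by simp
  then show ?thesis
  proof (rule rp_induct)
    fix r c assume r: "r \<in> ring_prodset (S (inv h)) (S h)" and c: "c \<in> S (inv h)"
    show "r * c * \<epsilon> h = r * c"
      using r
    proof (rule rp_induct)
      fix a b assume a: "a \<in> S (inv h)" and b: "b \<in> S h"
      have "b * c * \<epsilon> h = b * c" using eps_rid[OF h rp_single[OF b c]] .
      then show "a * b * c * \<epsilon> h = a * b * c" by (simp add: mult.assoc)
    qed (auto simp: distrib_right)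
  qed (auto simp: distrib_right)
qed

end



locale epsN = epsctx + fixes N assumes nrm: "N \<lhd> G"
begin

lemma sg: "subgroup N G" using nrm normal_imp_subgroup by blast
lemma FG: "group (G Mod N)" using normal.factorgroup_is_group[OF nrm] .
lemma carrM: "carrier (G Mod N) = rcosets N" by (simp add: FactGroup_def)

lemma rc_obtain: assumes "C \<in> rcosets N" obtains a where "a \<in> carrier G" "C = N #> a"
  using assms unfolding RCOSETS_def by blast

lemma rc_sub: "C \<in> rcosets N \<Longrightarrow> C \<subseteq> carrier G"
  by (erule rc_obtain) (auto simp: r_coset_def intro: m_closed subgroup.mem_carrier[OF sg])

lemma rc_repr: "C \<in> rcosets N \<Longrightarrow> g \<in> C \<Longrightarrow> C = N #> g"
  by (erule rc_obtain) (use repr_independence sg in blast)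

lemma rc_self: "C \<in> rcosets N \<Longrightarrow> \<exists>g. g \<in> C"
  by (erule rc_obtain) (use rcos_self sg in blast)

lemma ind_addsub: "C \<subseteq> carrier G \<Longrightarrow> addsub (induced S C)"
  by (rule induced_addsub) (auto intro: S_addsub)

lemma setmult_sub: "C \<subseteq> carrier G \<Longrightarrow> D \<subseteq> carrier G \<Longrightarrow> C <#> D \<subseteq> carrier G"
  by (auto simp: set_mult_def)

lemma ind_mult:
  assumes C: "C \<subseteq> carrier G" and D: "D \<subseteq> carrier G"
    and x: "x \<in> induced S C" and y: "y \<in> induced S D"
  shows "x * y \<in> induced S (C <#> D)"
proof -
  have A: "addsub (induced S (C <#> D))" using ind_addsub setmult_sub C D by blast
  show ?thesis using x
  proof (rule induced_induct)
    show "0 * y \<in> induced S (C <#> D)" using addsub_zero[OF A] by simp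
  next
    fix x1 x2 assume "x1 * y \<in> induced S (C <#> D)" "x2 * y \<in> induced S (C <#> D)"
    then show "(x1 + x2) * y \<in> induced S (C <#> D)" by (simp add: distrib_right addsub_add[OF A])
  next
    fix g s assume g: "g \<in> C" and s: "s \<in> S g"
    show "s * y \<in> induced S (C <#> D)" using y
    proof (rule induced_induct)
      show "s * 0 \<in> induced S (C <#> D)" using addsub_zero[OF A] by simp
    next
      fix y1 y2 assume "s * y1 \<in> induced S (C <#> D)" "s * y2 \<in> induced S (C <#> D)"
      then show "s * (y1 + y2) \<in> induced S (C <#> D)" by (simp add: distrib_left addsub_add[OF A])
    next
      fix h t assume h: "h \<in> D" and t: "t \<in> S h"
      have "s * t \<in> S (g \<otimes> h)" using S_mult g h C D s t by blast
      moreover have "g \<otimes> h \<in> C <#> D" using g h by (auto simp: set_mult_def)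
      ultimately show "s * t \<in> induced S (C <#> D)" by (rule induced_single[rotated])
    qed
  qed
qed

lemma decomp: "\<exists>F f. finite F \<and> F \<subseteq> rcosets N \<and> (\<forall>C\<in>F. f C \<in> induced S C) \<and> x = (\<Sum>C\<in>F. f C)"
proof -
  obtain F0 f0 where F0: "finite F0" "F0 \<subseteq> carrier G" "\<forall>h\<in>F0. f0 h \<in> S h" "x = (\<Sum>h\<in>F0. f0 h)"
    using gr unfolding is_grading_def by meson
  define K where "K = (\<lambda>h. N #> h) ` F0"
  define f where "f C = (\<Sum>h\<in>{h\<in>F0. N #> h = C}. f0 h)" for C
  have "(\<Sum>C\<in>K. f C) = x" unfolding f_def K_def F0(4)
    by (rule sum.group) (use F0 in auto)
  moreover have "finite K" "K \<subseteq> rcosets N" unfolding K_def using F0 rcosetsI subgroup.subset[OF sg] by auto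
  moreover have "f C \<in> induced S C" if "C \<in> K" for C
  proof -
    have "{h\<in>F0. N #> h = C} \<subseteq> C" using rcos_self sg F0(2) by blast
    then show ?thesis unfolding f_def induced_def
      by (intro CollectI exI[where x="{h\<in>F0. N #> h = C}"] exI[where x=f0]) (use F0 in auto)
  qed
  ultimately show ?thesis by metis
qed

lemma uniq:
  assumes K: "finite K" "K \<subseteq> rcosets N" and phi: "\<forall>C\<in>K. \<phi> C \<in> induced S C"
    and z: "(\<Sum>C\<in>K. \<phi> C) = 0" and C: "C \<in> K"
  shows "\<phi> C = 0"
proof -
  have "\<forall>C\<in>K. \<exists>F. \<exists>f. finite F \<and> F \<subseteq> C \<and> (\<forall>g\<in>F. f g \<in> S g) \<and> \<phi> C = (\<Sum>g\<in>F. f g)"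
    using phi unfolding induced_def by (simp add: conj_commute) metis
  then have "\<exists>FF. \<forall>C\<in>K. \<exists>f. finite (FF C) \<and> FF C \<subseteq> C \<and> (\<forall>g\<in>FF C. f g \<in> S g) \<and> \<phi> C = (\<Sum>g\<in>FF C. f g)"
    by (rule bchoice)
  then obtain FF where "\<forall>C\<in>K. \<exists>f. finite (FF C) \<and> FF C \<subseteq> C \<and> (\<forall>g\<in>FF C. f g \<in> S g) \<and> \<phi> C = (\<Sum>g\<in>FF C. f g)"
    by (elim exE)
  then have "\<exists>ff. \<forall>C\<in>K. finite (FF C) \<and> FF C \<subseteq> C \<and> (\<forall>g\<in>FF C. ff C g \<in> S g) \<and> \<phi> C = (\<Sum>g\<in>FF C. ff C g)"
    by (rule bchoice)
  then obtain ff where FF: "\<forall>C\<in>K. finite (FF C) \<and> FF C \<subseteq> C \<and> (\<forall>g\<in>FF C. ff C g \<in> S g) \<and> \<phi> C = (\<Sum>g\<in>FF C. ff C g)"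
    by (elim exE)
  have FFfin: "finite (FF D)" and FFsub: "FF D \<subseteq> D" and FFS: "\<And>g. g \<in> FF D \<Longrightarrow> ff D g \<in> S g"
    and FFphi: "\<phi> D = (\<Sum>g\<in>FF D. ff D g)" if "D \<in> K" for D
    using FF that by auto
  define \<psi> where "\<psi> g = ff (N #> g) g" for g
  define U where "U = (\<Union>C\<in>K. FF C)"
  have rep: "N #> g = D" if D: "D \<in> K" and g: "g \<in> FF D" for D g
  proof -
    have "D \<in> rcosets N" using K D by blast
    moreover have "g \<in> D" using FFsub[OF D] g by blast
    ultimately show ?thesis using rc_repr by simp
  qed
  have phiD: "\<phi> D = (\<Sum>g\<in>FF D. \<psi> g)" if D: "D \<in> K" for D
    unfolding FFphi[OF D] by (rule sum.cong) (simp_all add: \<psi>_def rep[OF D])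
  have disj: "\<forall>i\<in>K. \<forall>j\<in>K. i \<noteq> j \<longrightarrow> FF i \<inter> FF j = {}"
  proof (intro ballI impI)
    fix i j assume i: "i \<in> K" and j: "j \<in> K" and ne: "i \<noteq> j"
    show "FF i \<inter> FF j = {}"
    proof (rule ccontr)
      assume "FF i \<inter> FF j \<noteq> {}"
      then obtain g where "g \<in> FF i" "g \<in> FF j" by blast
      then have "i = j" using rep[OF i] rep[OF j] by metis
      then show False using ne by simp
    qed
  qed
  have "(\<Sum>g\<in>U. \<psi> g) = (\<Sum>D\<in>K. \<Sum>g\<in>FF D. \<psi> g)" unfolding U_def
    by (rule sum.UNION_disjoint[OF K(1) _ disj]) (simp add: FFfin)
  also have "\<dots> = 0" using z phiD by simp
  finally have U0: "(\<Sum>g\<in>U. \<psi> g) = 0" .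
  have Uf: "finite U" unfolding U_def using K(1) FFfin by simp
  have Uc: "U \<subseteq> carrier G"
  proof
    fix g assume "g \<in> U"
    then obtain D where D: "D \<in> K" "g \<in> FF D" unfolding U_def by blast
    then show "g \<in> carrier G" using FFsub[OF D(1)] rc_sub[of D] K(2) by blast
  qed
  have US: "\<forall>g\<in>U. \<psi> g \<in> S g"
  proof
    fix g assume "g \<in> U"
    then obtain D where D: "D \<in> K" "g \<in> FF D" unfolding U_def by blast
    then show "\<psi> g \<in> S g" unfolding \<psi>_def rep[OF D] using FFS by blast
  qed
  have "\<forall>F f. finite F \<and> F \<subseteq> carrier G \<and> (\<forall>h\<in>F. f h \<in> S h) \<and> (\<Sum>h\<in>F. f h) = 0
            \<longrightarrow> (\<forall>h\<in>F. f h = 0)" using gr unfolding is_grading_def by blast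
  then have "\<forall>g\<in>U. \<psi> g = 0" using Uf Uc US U0 by blast
  then show ?thesis using phiD[OF C] C by (auto simp: U_def)
qed

lemma grading: "is_grading (G Mod N) (induced S)"
  unfolding is_grading_def carrM
proof (intro conjI ballI allI impI)
  fix C assume "C \<in> rcosets N"
  then have A: "addsub (induced S C)" using ind_addsub rc_sub by blast
  show "0 \<in> induced S C" using addsub_zero[OF A] .
  fix x y assume "x \<in> induced S C" "y \<in> induced S C" then show "x - y \<in> induced S C"
    using addsub_diff[OF A] by blast
next
  fix C D x y assume "C \<in> rcosets N" "D \<in> rcosets N" "x \<in> induced S C" "y \<in> induced S D"
  then show "x * y \<in> induced S (C \<otimes>\<^bsub>G Mod N\<^esub> D)" using ind_mult rc_sub by simp
next
  fix x show "\<exists>F f. finite F \<and> F \<subseteq> rcosets N \<and> (\<forall>C\<in>F. f C \<in> induced S C) \<and> x = (\<Sum>C\<in>F. f C)"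
    by (rule decomp)
next
  fix F f C assume "finite F \<and> F \<subseteq> rcosets N \<and> (\<forall>C\<in>F. f C \<in> induced S C) \<and> sum f F = 0" "C \<in> F"
  then show "f C = 0" using uniq by blast
qed

end



context epsN begin

lemma N_sub: "N \<subseteq> carrier G" using subgroup.subset[OF sg] .

lemma Ci_rc: "C \<in> rcosets N \<Longrightarrow> set_inv C \<in> rcosets N"
  using normal.setinv_closed[OF nrm] by blast

lemma Ci_inv: "C \<in> rcosets N \<Longrightarrow> inv\<^bsub>G Mod N\<^esub> C = set_inv C"
  by (rule normal.inv_FactGroup[OF nrm]) (simp add: carrM)

lemma CCi: assumes "C \<in> rcosets N" shows "C <#> set_inv C = N"
proof -
  have "C \<otimes>\<^bsub>G Mod N\<^esub> inv\<^bsub>G Mod N\<^esub> C = \<one>\<^bsub>G Mod N\<^esub>"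
    by (rule group.r_inv[OF FG]) (simp add: carrM assms)
  then show ?thesis using Ci_inv[OF assms] by simp
qed

lemma NC: "C \<in> rcosets N \<Longrightarrow> N <#> C = C"
  using normal.rcosets_mult_eq[OF nrm] .

lemma inv_mem: "g \<in> C \<Longrightarrow> inv g \<in> set_inv C"
  by (auto simp: SET_INV_def)

lemma inv_mem2: "k \<in> set_inv C \<Longrightarrow> \<exists>g\<in>C. k = inv g"
  by (auto simp: SET_INV_def)

abbreviation RC where "RC C \<equiv> ring_prodset (induced S C) (induced S (set_inv C))"

lemma RC_N: assumes C: "C \<in> rcosets N" shows "RC C \<subseteq> induced S N"
proof (rule rp_subset)
  show "addsub (induced S N)" using ind_addsub N_sub by blast
  fix a b assume "a \<in> induced S C" "b \<in> induced S (set_inv C)"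
  then show "a * b \<in> induced S N"
    using ind_mult[of C "set_inv C" a b] rc_sub[OF C] rc_sub[OF Ci_rc[OF C]] CCi[OF C] by simp
qed

lemma RC_S: assumes C: "C \<in> rcosets N" and r: "r \<in> RC C" and c: "c \<in> induced S C"
  shows "r * c \<in> induced S C"
proof -
  have "r \<in> induced S N" using RC_N[OF C] r by blast
  then have "r * c \<in> induced S (N <#> C)" by (rule ind_mult[OF N_sub rc_sub[OF C] _ c])
  then show ?thesis using NC[OF C] by simp
qed

lemma RC_addsub: "C \<in> rcosets N \<Longrightarrow> addsub (RC C)"
  by (rule rp_addsub, rule ind_addsub, rule rc_sub)

lemma RC_mult: assumes C: "C \<in> rcosets N" and x: "x \<in> RC C" and y: "y \<in> RC C"
  shows "x * y \<in> RC C"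
  using y
proof (rule rp_induct)
  show "x * 0 \<in> RC C" using rp_zero by simp
next
  fix a b assume a: "a \<in> induced S C" and b: "b \<in> induced S (set_inv C)"
  have "x * a \<in> induced S C" using RC_S[OF C x a] .
  then show "x * (a * b) \<in> RC C" using rp_single[OF _ b] by (simp add: mult.assoc[symmetric])
next
  fix y1 y2 assume "x * y1 \<in> RC C" "x * y2 \<in> RC C"
  then show "x * (y1 + y2) \<in> RC C" by (simp add: distrib_left rp_add)
qed

lemma eps_RC: assumes C: "C \<in> rcosets N" and g: "g \<in> C" shows "\<epsilon> g \<in> RC C"
proof -
  have gc: "g \<in> carrier G" using rc_sub[OF C] g by blast
  have "ring_prodset (S g) (S (inv g)) \<subseteq> RC C"
  proof (rule rp_subset)
    show "addsub (RC C)" using RC_addsub[OF C] .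
    fix a b assume a: "a \<in> S g" and b: "b \<in> S (inv g)"
    show "a * b \<in> RC C"
      by (rule rp_single[OF induced_single[where S=S, OF g a] induced_single[where S=S, OF inv_mem[OF g] b]])
  qed
  then show ?thesis using eps_in[OF gc] by blast
qed

lemma joins_RC: assumes C: "C \<in> rcosets N" shows "x \<in> joins (\<epsilon> ` C) \<Longrightarrow> x \<in> RC C"
proof (induction rule: joins.induct)
  case (base e) then show ?case using eps_RC[OF C] by blast
next
  case (join a b)
  have ab: "a * b \<in> RC C" using RC_mult[OF C join.IH] .
  have "a + b \<in> RC C" using addsub_add[OF RC_addsub[OF C] join.IH] .
  then show ?case using addsub_diff[OF RC_addsub[OF C] _ ab] by blast
qed

lemma fin_join:
  assumes C: "C \<in> rcosets N" and F: "finite F" "F \<noteq> {}" "F \<subseteq> C"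
  shows "\<exists>j\<in>joins (\<epsilon> ` C). (\<forall>g\<in>F. j * \<epsilon> g = \<epsilon> g \<and> \<epsilon> g * j = \<epsilon> g) \<and> (\<forall>k\<in>carrier G. j * \<epsilon> k = \<epsilon> k * j)"
  using F
proof (induction F rule: finite_ne_induct)
  case (singleton h)
  then have h: "h \<in> carrier G" using rc_sub[OF C] by blast
  have hC: "h \<in> C" using singleton by simp
  have "\<epsilon> h \<in> joins (\<epsilon> ` C)" by (rule joins.base) (use hC in blast)
  moreover have "\<forall>g\<in>{h}. \<epsilon> h * \<epsilon> g = \<epsilon> g \<and> \<epsilon> g * \<epsilon> h = \<epsilon> g" using eps_idem[OF h] by simp
  moreover have "\<forall>k\<in>carrier G. \<epsilon> h * \<epsilon> k = \<epsilon> k * \<epsilon> h" using eps_comm[OF h] by blast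
  ultimately show ?case by blast
next
  case (insert h F)
  then obtain j where j: "j \<in> joins (\<epsilon> ` C)" "\<forall>g\<in>F. j * \<epsilon> g = \<epsilon> g \<and> \<epsilon> g * j = \<epsilon> g"
    "\<forall>k\<in>carrier G. j * \<epsilon> k = \<epsilon> k * j" by blast
  have hC: "h \<in> C" using insert by blast
  have h: "h \<in> carrier G" using rc_sub[OF C] hC by blast
  define j' where "j' = j + \<epsilon> h - j * \<epsilon> h"
  have "j' \<in> joins (\<epsilon> ` C)" unfolding j'_def using j(1) hC by (auto intro: joins.intros)
  moreover have "j' * \<epsilon> g = \<epsilon> g \<and> \<epsilon> g * j' = \<epsilon> g" if g: "g \<in> insert h F" for g
  proof (cases "g = h")
    case True
    have "j' * \<epsilon> h = j * \<epsilon> h + \<epsilon> h * \<epsilon> h - j * (\<epsilon> h * \<epsilon> h)"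
      unfolding j'_def by (simp add: algebra_simps)
    also have "\<dots> = \<epsilon> h" using eps_idem[OF h] by simp
    finally have 1: "j' * \<epsilon> h = \<epsilon> h" .
    have "\<epsilon> h * j' = \<epsilon> h * j + \<epsilon> h * \<epsilon> h - (\<epsilon> h * j) * \<epsilon> h"
      unfolding j'_def by (simp add: algebra_simps)
    also have "\<dots> = j * \<epsilon> h + \<epsilon> h - j * (\<epsilon> h * \<epsilon> h)"
    proof -
      have jh: "\<epsilon> h * j = j * \<epsilon> h" using j(3) h by simp
      show ?thesis by (simp add: jh mult.assoc eps_idem[OF h])
    qed
    also have "\<dots> = \<epsilon> h" using eps_idem[OF h] by simp
    finally show ?thesis using 1 True by simp
  next
    case False
    then have gF: "g \<in> F" using g by simp
    have gc: "g \<in> carrier G" using rc_sub[OF C] insert gF by blast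
    have jg: "j * \<epsilon> g = \<epsilon> g" "\<epsilon> g * j = \<epsilon> g" using j(2) gF by auto
    have c: "\<epsilon> h * \<epsilon> g = \<epsilon> g * \<epsilon> h" using eps_comm h gc by blast
    have "j' * \<epsilon> g = j * \<epsilon> g + \<epsilon> h * \<epsilon> g - j * (\<epsilon> h * \<epsilon> g)"
      unfolding j'_def by (simp add: algebra_simps)
    also have "\<dots> = \<epsilon> g + \<epsilon> h * \<epsilon> g - (j * \<epsilon> g) * \<epsilon> h"
    proof -
      have "j * (\<epsilon> h * \<epsilon> g) = (j * \<epsilon> g) * \<epsilon> h" by (simp add: c mult.assoc)
      then show ?thesis using jg by simp
    qed
    also have "\<dots> = \<epsilon> g" using jg c by simp
    finally have 1: "j' * \<epsilon> g = \<epsilon> g" .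
    have "\<epsilon> g * j' = \<epsilon> g * j + \<epsilon> g * \<epsilon> h - (\<epsilon> g * j) * \<epsilon> h"
      unfolding j'_def by (simp add: algebra_simps)
    also have "\<dots> = \<epsilon> g" using jg by simp
    finally show ?thesis using 1 by simp
  qed
  moreover have "j' * \<epsilon> k = \<epsilon> k * j'" if k: "k \<in> carrier G" for k
  proof -
    have c: "\<epsilon> h * \<epsilon> k = \<epsilon> k * \<epsilon> h" using eps_comm h k by blast
    have jk: "j * \<epsilon> k = \<epsilon> k * j" using j(3) k by blast
    have "j' * \<epsilon> k = j * \<epsilon> k + \<epsilon> h * \<epsilon> k - j * (\<epsilon> h * \<epsilon> k)"
      unfolding j'_def by (simp add: algebra_simps)
    also have "\<dots> = \<epsilon> k * j + \<epsilon> k * \<epsilon> h - (j * \<epsilon> k) * \<epsilon> h"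
    proof -
      have e1: "j * (\<epsilon> h * \<epsilon> k) = (j * \<epsilon> k) * \<epsilon> h" by (simp add: c mult.assoc)
      show ?thesis by (subst e1) (simp only: jk c)
    qed
    also have "\<dots> = \<epsilon> k * j + \<epsilon> k * \<epsilon> h - \<epsilon> k * (j * \<epsilon> h)" using jk by (simp add: mult.assoc)
    also have "\<dots> = \<epsilon> k * j'" unfolding j'_def by (simp add: algebra_simps)
    finally show ?thesis .
  qed
  ultimately show ?case by blast
qed

end



context epsN begin

lemma exists_e:
  assumes C: "C \<in> rcosets N" and fin: "finite (joins (\<epsilon> ` carrier G))"
  shows "\<exists>e\<in>joins (\<epsilon> ` C). \<forall>g\<in>C. e * \<epsilon> g = \<epsilon> g \<and> \<epsilon> g * e = \<epsilon> g"
proof (rule ccontr)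
  define J where "J = joins (\<epsilon> ` C)"
  assume "\<not> ?thesis"
  then have "\<forall>e\<in>J. \<exists>g. g \<in> C \<and> \<not> (e * \<epsilon> g = \<epsilon> g \<and> \<epsilon> g * e = \<epsilon> g)" unfolding J_def by blast
  then have "\<exists>pick. \<forall>e\<in>J. pick e \<in> C \<and> \<not> (e * \<epsilon> (pick e) = \<epsilon> (pick e) \<and> \<epsilon> (pick e) * e = \<epsilon> (pick e))"
    by (rule bchoice)
  then obtain pick where pick: "\<forall>e\<in>J. pick e \<in> C \<and> \<not> (e * \<epsilon> (pick e) = \<epsilon> (pick e) \<and> \<epsilon> (pick e) * e = \<epsilon> (pick e))"
    by (elim exE)
  have "J \<subseteq> joins (\<epsilon> ` carrier G)" unfolding J_def
    using joins_mono[of _ "\<epsilon> ` C" "\<epsilon> ` carrier G"] rc_sub[OF C] by blast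
  then have Jf: "finite J" using fin finite_subset by blast
  obtain g0 where g0: "g0 \<in> C" using rc_self[OF C] by blast
  have "\<epsilon> g0 \<in> J" unfolding J_def by (rule joins.base) (use g0 in blast)
  then have Jne: "J \<noteq> {}" by blast
  have "\<exists>j\<in>J. (\<forall>g\<in>pick ` J. j * \<epsilon> g = \<epsilon> g \<and> \<epsilon> g * j = \<epsilon> g) \<and> (\<forall>k\<in>carrier G. j * \<epsilon> k = \<epsilon> k * j)"
    unfolding J_def
    by (rule fin_join[OF C]) (use Jf Jne pick J_def in auto)
  then obtain j where j: "j \<in> J" "\<forall>g\<in>pick ` J. j * \<epsilon> g = \<epsilon> g \<and> \<epsilon> g * j = \<epsilon> g" by blast
  then have "j * \<epsilon> (pick j) = \<epsilon> (pick j) \<and> \<epsilon> (pick j) * j = \<epsilon> (pick j)" by blast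
  then show False using pick j(1) by blast
qed

lemma e_left:
  assumes C: "C \<in> rcosets N" and e: "\<forall>g\<in>C. e * \<epsilon> g = \<epsilon> g \<and> \<epsilon> g * e = \<epsilon> g"
    and a: "a \<in> induced S C"
  shows "e * a = a"
  using a
  proof (rule induced_induct)
    fix g s assume g: "g \<in> C" and s: "s \<in> S g"
    have gc: "g \<in> carrier G" using rc_sub[OF C] g by blast
    have "e * s = e * (\<epsilon> g * s)" using eps_left[OF gc s] by simp
    also have "\<dots> = (e * \<epsilon> g) * s" by (simp add: mult.assoc)
    also have "\<dots> = s" using e g eps_left[OF gc s] by simp
    finally show "e * s = s" .
qed (auto simp: distrib_left)

lemma e_identity:
  assumes C: "C \<in> rcosets N" and eJ: "e \<in> joins (\<epsilon> ` C)"
    and e: "\<forall>g\<in>C. e * \<epsilon> g = \<epsilon> g \<and> \<epsilon> g * e = \<epsilon> g"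
  shows "is_identity_of e (RC C)"
proof -
  have eR: "e \<in> RC C" using joins_RC[OF C eJ] .
  have L: "e * a = a" if a: "a \<in> induced S C" for a
    using e_left[OF C e a] .
  have R: "b * e = b" if b: "b \<in> induced S (set_inv C)" for b
    using b
  proof (rule induced_induct)
    fix k t assume k: "k \<in> set_inv C" and t: "t \<in> S k"
    obtain g where g: "g \<in> C" "k = inv g" using inv_mem2[OF k] by blast
    have gc: "g \<in> carrier G" using rc_sub[OF C] g by blast
    have t': "t \<in> S (inv g)" using t g by simp
    have "t * e = (t * \<epsilon> g) * e" using eps_right[OF gc t'] by simp
    also have "\<dots> = t * (\<epsilon> g * e)" by (simp add: mult.assoc)
    also have "\<dots> = t" using e g eps_right[OF gc t'] by simp
    finally show "t * e = t" .
  qed (auto simp: distrib_right)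
  have "e * x = x \<and> x * e = x" if x: "x \<in> RC C" for x
    using x
  proof (rule rp_induct)
    fix a b assume a: "a \<in> induced S C" and b: "b \<in> induced S (set_inv C)"
    show "e * (a * b) = a * b \<and> a * b * e = a * b"
      using L[OF a] R[OF b] by (simp add: mult.assoc[symmetric]) (simp add: mult.assoc)
  qed (auto simp: distrib_left distrib_right)
  then show ?thesis unfolding is_identity_of_def using eR by blast
qed

lemma RRS_C:
  assumes C: "C \<in> rcosets N" and eJ: "e \<in> joins (\<epsilon> ` C)"
    and e: "\<forall>g\<in>C. e * \<epsilon> g = \<epsilon> g \<and> \<epsilon> g * e = \<epsilon> g"
  shows "ring_prodset (RC C) (induced S C) = induced S C"
proof
  show "ring_prodset (RC C) (induced S C) \<subseteq> induced S C"
    by (rule rp_subset) (use ind_addsub rc_sub[OF C] RC_S[OF C] in auto)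
  show "induced S C \<subseteq> ring_prodset (RC C) (induced S C)"
  proof
    fix s assume s: "s \<in> induced S C"
    have eR: "e \<in> RC C" using joins_RC[OF C eJ] .
    have "e * s = s" using e_left[OF C e s] .
    then show "s \<in> ring_prodset (RC C) (induced S C)" using rp_single[OF eR s] by simp
  qed
qed

end



lemma identity_unique_gl: "is_identity_of e A \<Longrightarrow> is_identity_of e' A \<Longrightarrow> e' = e"
  unfolding is_identity_of_def by metis

theorem proposition6p3:
  fixes G :: "('g, 'm) monoid_scheme" and S :: "'g \<Rightarrow> 'a::ring set" and N :: "'g set"
  assumes "group G"
    and "epsilon_finite G S"
    and "N \<lhd> G"
  shows "epsilon_finite (G Mod N) (induced S)"
proof -
  have es: "epsilon_strong G S" and fin: "finite (joins (eps G S ` carrier G))"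
    using assms(2) by (auto simp: epsilon_finite_def)
  have loc: "epsN G S N"
    using assms(1,3) es by (simp add: epsN_def epsctx_def epsN_axioms_def epsctx_axioms_def)
  have key: "\<exists>e\<in>joins (eps G S ` C). is_identity_of e (ring_prodset (induced S C) (induced S (inv\<^bsub>G Mod N\<^esub> C)))
      \<and> ring_prodset (ring_prodset (induced S C) (induced S (inv\<^bsub>G Mod N\<^esub> C))) (induced S C) = induced S C"
    if C: "C \<in> carrier (G Mod N)" for C
  proof -
    have C': "C \<in> rcosets\<^bsub>G\<^esub> N" using C epsN.carrM[OF loc] by simp
    obtain e where eJ: "e \<in> joins (eps G S ` C)" and e: "\<forall>g\<in>C. e * eps G S g = eps G S g \<and> eps G S g * e = eps G S g"
      using epsN.exists_e[OF loc C' fin] by blast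
    show ?thesis
      using epsN.e_identity[OF loc C' eJ e] epsN.RRS_C[OF loc C' eJ e] eJ epsN.Ci_inv[OF loc C'] by auto
  qed
  have strong: "epsilon_strong (G Mod N) (induced S)"
    unfolding epsilon_strong_def using epsN.grading[OF loc] key by blast
  have epsM: "eps (G Mod N) (induced S) C \<in> joins (eps G S ` carrier G)" if C: "C \<in> carrier (G Mod N)" for C
  proof -
    obtain e where eJ: "e \<in> joins (eps G S ` C)"
      and e: "is_identity_of e (ring_prodset (induced S C) (induced S (inv\<^bsub>G Mod N\<^esub> C)))"
      using key[OF C] by blast
    have "eps (G Mod N) (induced S) C = e" unfolding eps_def
      by (rule the_equality) (use e identity_unique_gl in blast)+
    moreover have "C \<subseteq> carrier G" using C epsN.carrM[OF loc] epsN.rc_sub[OF loc] by auto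
    ultimately show ?thesis using joins_mono[OF eJ] by blast
  qed
  have "joins (eps (G Mod N) (induced S) ` carrier (G Mod N)) \<subseteq> joins (eps G S ` carrier G)"
  proof
    fix x assume "x \<in> joins (eps (G Mod N) (induced S) ` carrier (G Mod N))"
    then show "x \<in> joins (eps G S ` carrier G)"
      by (rule joins_sub) (use epsM in blast)
  qed
  then have "finite (joins (eps (G Mod N) (induced S) ` carrier (G Mod N)))"
    using fin finite_subset by blast
  then show ?thesis unfolding epsilon_finite_def using strong by blast
qed


end
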